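(* Let $\mathfrak{R}$ be an alternative ring with a nontrivial idempotent $e_1$, with Peirce decomposition $\mathfrak{R}=\mathfrak{R}_{11}\oplus\mathfrak{R}_{12}\oplus\mathfrak{R}_{21}\oplus\mathfrak{R}_{22}$ relative to $e_1$, and let $\mathcal{D}\colon\mathfrak{R}\to\mathfrak{R}$ be a multiplicative Lie-type derivation of $\mathfrak{R}$. Suppose that $\mathfrak{R}$ satisfies: (i) if $a_{11}\in\mathfrak{R}_{11}$, $a_{22}\in\mathfrak{R}_{22}$ and $[a_{11}+a_{22},x]=0$ for all $x\in\mathfrak{R}_{12}$, then $a_{11}+a_{22}\in\mathcal{Z}(\mathfrak{R})$; (ii) if $a_{11}\in\mathfrak{R}_{11}$, $a_{22}\in\mathfrak{R}_{22}$ and $[a_{11}+a_{22},x]=0$ for all $x\in\mathfrak{R}_{21}$, then $a_{11}+a_{22}\in\mathcal{Z}(\mathfrak{R})$. Then $\mathcal{D}$ is almost additive, i.e. $\mathcal{D}(a+b)-\mathcal{D}(a)-\mathcal{D}(b)\in\mathcal{Z}(\mathfrak{R})$ for all $a,b\in\mathfrak{R}$.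
   Context: Rings are not assumed associative or unital. The associator is $(x,y,z)=(xy)z-x(yz)$; $\mathfrak{R}$ is alternative if $(x,x,y)=0=(y,x,x)$ for all $x,y$. $[x,y]=xy-yx$ and $\mathcal{Z}(\mathfrak{R})=\{r\in\mathfrak{R}: [r,x]=0 \text{ for all } x\in\mathfrak{R}\}$ is the commutative center. Define $p_1(x)=x$ and $p_n(x_1,\dots,x_n)=[p_{n-1}(x_1,\dots,x_{n-1}),x_n]$ for $n\ge 2$. For an integer $n\ge2$, a map $\mathcal{D}\colon\mathfrak{R}\to\mathfrak{R}$ (not necessarily additive) is a multiplicative Lie $n$-derivation if $\mathcal{D}(p_n(x_1,\dots,x_n))=\sum_{i=1}^n p_n(x_1,\dots,x_{i-1},\mathcal{D}(x_i),x_{i+1},\dots,x_n)$ for all $x_1,\dots,x_n\in\mathfrak{R}$; a multiplicative Lie-type derivation is a multiplicative Lie $n$-derivation for some $n\ge 2$. A nontrivial idempotent is an element $e_1\neq0$ with $e_1^2=e_1$ which is not a multiplicative identity of $\mathfrak{R}$. Writing $e_2a:=a-e_1a$ and $ae_2:=a-ae_1$, one has $(e_ia)e_j=e_i(ae_j)$, and $\mathfrak{R}_{ij}=e_i\mathfrak{R}e_j$ ($i,j=1,2$) gives the Peirce decomposition $\mathfrak{R}=\mathfrak{R}_{11}\oplus\mathfrak{R}_{12}\oplus\mathfrak{R}_{21}\oplus\mathfrak{R}_{22}$. *)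

theory Defs
  imports Main
begin

class alt_ring = ab_group_add + times +
  assumes distrib_left_nar: "x * (y + z) = x * y + x * z"
    and distrib_right_nar: "(x + y) * z = x * z + y * z"
    and left_alternative: "(x * x) * y - x * (x * y) = 0"
    and right_alternative: "(y * x) * x - y * (x * x) = 0"

definition associator :: "'a::alt_ring \<Rightarrow> 'a \<Rightarrow> 'a \<Rightarrow> 'a" where
  "associator x y z = (x * y) * z - x * (y * z)"

definition commutator :: "'a::alt_ring \<Rightarrow> 'a \<Rightarrow> 'a" where
  "commutator x y = x * y - y * x"

definition comm_center :: "'a::alt_ring set" where
  "comm_center = {r. \<forall>x. commutator r x = 0}"

text \<open>p_n(x_1,...,x_n) for the list [x_1,...,x_n]: p_1(x)=x,
  p_n(x_1..x_n) = [p_{n-1}(x_1..x_{n-1}), x_n].\<close>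
fun lie_poly :: "'a::alt_ring list \<Rightarrow> 'a" where
  "lie_poly [] = 0"
| "lie_poly (x # xs) = foldl commutator x xs"

definition mult_lie_n_derivation :: "nat \<Rightarrow> ('a::alt_ring \<Rightarrow> 'a) \<Rightarrow> bool" where
  "mult_lie_n_derivation n D \<longleftrightarrow>
     (\<forall>xs. length xs = n \<longrightarrow>
        D (lie_poly xs) = (\<Sum>i<n. lie_poly (xs[i := D (xs ! i)])))"

definition mult_lie_type_derivation :: "('a::alt_ring \<Rightarrow> 'a) \<Rightarrow> bool" where
  "mult_lie_type_derivation D \<longleftrightarrow> (\<exists>n\<ge>2. mult_lie_n_derivation n D)"

definition nontrivial_idempotent :: "'a::alt_ring \<Rightarrow> bool" where
  "nontrivial_idempotent e \<longleftrightarrow> e \<noteq> 0 \<and> e * e = e \<and>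
     \<not> (\<forall>x. e * x = x \<and> x * e = x)"

text \<open>Peirce components relative to e1 (with e2 a := a - e1 a, a e2 := a - a e1).\<close>
definition peirce11 :: "'a::alt_ring \<Rightarrow> 'a set" where
  "peirce11 e = {(e * a) * e | a. True}"
definition peirce12 :: "'a::alt_ring \<Rightarrow> 'a set" where
  "peirce12 e = {(e * a) - (e * a) * e | a. True}"
definition peirce21 :: "'a::alt_ring \<Rightarrow> 'a set" where
  "peirce21 e = {(a - e * a) * e | a. True}"
definition peirce22 :: "'a::alt_ring \<Rightarrow> 'a set" where
  "peirce22 e = {(a - e * a) - (a - e * a) * e | a. True}"

end

theory Submission imports Defs begin

context alt_ring begin
lemma mz_r[simp]: "x * 0 = 0"
proof - have "x*(0+0) = x*0 + x*0" by (rule distrib_left_nar) thus ?thesis by simp qed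
lemma mz_l[simp]: "0 * x = 0"
proof - have "(0+0)*x = 0*x + 0*x" by (rule distrib_right_nar) thus ?thesis by simp qed
lemma mm_r[simp]: "x * (- y) = - (x * y)"
proof - have "x*(-y) + x*y = x*(-y+y)" by (simp only: distrib_left_nar) also have "\<dots> = 0" by simp
  finally show ?thesis by (simp only: eq_neg_iff_add_eq_0) qed
lemma mm_l[simp]: "(- x) * y = - (x * y)"
proof - have "(-x)*y + x*y = (-x+x)*y" by (simp only: distrib_right_nar) also have "\<dots> = 0" by simp
  finally show ?thesis by (simp only: eq_neg_iff_add_eq_0) qed
lemma md_r: "x * (y - z) = x*y - x*z"
  by (simp only: diff_conv_add_uminus distrib_left_nar mm_r)
lemma md_l: "(x - y) * z = x*z - y*z"
  by (simp only: diff_conv_add_uminus distrib_right_nar mm_l)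
lemmas rs = distrib_left_nar distrib_right_nar md_r md_l
end

lemma assoc_swap12: "associator (a::'a::alt_ring) b c = - associator b a c"
proof -
  have h: "((a+b)*(a+b))*c - (a+b)*((a+b)*c) = 0" by (rule left_alternative)
  have ha: "(a*a)*c = a*(a*c)" using left_alternative[of a c] by simp
  have hb: "(b*b)*c = b*(b*c)" using left_alternative[of b c] by simp
  from h show ?thesis unfolding associator_def by (simp add: rs ha hb algebra_simps)
qed

lemma assoc_swap23: "associator (a::'a::alt_ring) b c = - associator a c b"
proof -
  have h: "(a*(b+c))*(b+c) - a*((b+c)*(b+c)) = 0" by (rule right_alternative)
  have ha: "(a*b)*b = a*(b*b)" using right_alternative[of a b] by simp
  have hb: "(a*c)*c = a*(c*c)" using right_alternative[of a c] by simp
  from h show ?thesis unfolding associator_def by (simp add: rs ha hb algebra_simps)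
qed

lemma assoc_xxy[simp]: "associator (x::'a::alt_ring) x y = 0"
  using left_alternative[of x y] by (simp add: associator_def)
lemma assoc_yxx[simp]: "associator (y::'a::alt_ring) x x = 0"
  using right_alternative[of y x] by (simp add: associator_def)
lemma assoc_xyx[simp]: "associator (x::'a::alt_ring) y x = 0"
  using assoc_swap23[of x y x] by simp

lemma teich: "associator ((w::'a::alt_ring)*x) y z - associator w (x*y) z + associator w x (y*z)
   = w * associator x y z + associator w x y * z"
  unfolding associator_def by (simp add: rs algebra_simps)

lemma moufang_l: "(((x::'a::alt_ring)*a)*x)*y = x*(a*(x*y))"
proof -
  have t1: "associator x (x*a) y = associator (x*x) a y - x * associator x a y"
    using teich[of x x a y] by (simp add: algebra_simps)
  have t2: "associator x (x*y) a = associator (x*x) y a - x * associator x y a"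
    using teich[of x x y a] by (simp add: algebra_simps)
  have "((x*a)*x)*y - x*(a*(x*y)) = associator (x*a) x y + associator x a (x*y)"
    by (simp add: associator_def algebra_simps)
  also have "\<dots> = - associator x (x*a) y - associator x (x*y) a"
    using assoc_swap12[of "x*a" x y] assoc_swap23[of x a "x*y"] by simp
  also have "\<dots> = 0" unfolding t1 t2
    using assoc_swap23[of "x*x" a y] assoc_swap23[of x a y] by (simp add: algebra_simps)
  finally show ?thesis by simp
qed

lemma moufang_r: "y*(((x::'a::alt_ring)*a)*x) = ((y*x)*a)*x"
proof -
  have t1: "associator y (a*x) x = associator y a (x*x) - associator y a x * x"
    using teich[of y a x x] by (simp add: algebra_simps)
  have t2: "associator a (y*x) x = associator a y (x*x) - associator a y x * x"
    using teich[of a y x x] by (simp add: algebra_simps)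
  have fx: "(x*a)*x = x*(a*x)" using assoc_xyx[of x a] unfolding associator_def by simp
  have "((y*x)*a)*x - y*((x*a)*x) = associator (y*x) a x + associator y x (a*x)"
    unfolding fx by (simp add: associator_def)
  also have "\<dots> = - associator a (y*x) x - associator y (a*x) x"
    using assoc_swap12[of "y*x" a x] assoc_swap23[of y x "a*x"] by simp
  also have "\<dots> = 0" unfolding t1 t2
    using assoc_swap12[of a y "x*x"] assoc_swap12[of a y x] by (simp add: algebra_simps)
  finally show ?thesis by simp
qed

lemma comm_add_l: "commutator ((a::'a::alt_ring) + b) c = commutator a c + commutator b c"
  unfolding commutator_def by (simp add: rs algebra_simps)
lemma comm_add_r: "commutator (c::'a::alt_ring) (a + b) = commutator c a + commutator c b"
  unfolding commutator_def by (simp add: rs algebra_simps)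
lemma comm_neg_l: "commutator (- (a::'a::alt_ring)) c = - commutator a c"
  unfolding commutator_def by (simp add: algebra_simps)
lemma comm_neg_r: "commutator (c::'a::alt_ring) (- a) = - commutator c a"
  unfolding commutator_def by (simp add: algebra_simps)
lemma comm_0[simp]: "commutator (0::'a::alt_ring) c = 0" "commutator c (0::'a::alt_ring) = 0"
  unfolding commutator_def by simp_all
lemma comm_swap: "commutator (a::'a::alt_ring) b = - commutator b a"
  unfolding commutator_def by simp

definition sc :: "bool \<Rightarrow> 'a::alt_ring \<Rightarrow> 'a" where "sc b x = (if b then x else 0)"
lemma sc_simps[simp]: "sc True x = x" "sc False x = 0" by (simp_all add: sc_def)
lemma sc_mult: "(sc b x) * y = sc b (x * y)" "y * (sc b x) = sc b (y * x)" by (simp_all add: sc_def)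

locale peirce =
  fixes e :: "'a::alt_ring"
  assumes idem: "e * e = e"
begin

lemma ee_l: "e*(e*z) = e*z"
  using left_alternative[of e z] by (simp add: idem)
lemma ee_r: "(z*e)*e = z*e"
  using right_alternative[of z e] by (simp add: idem)
lemma flex: "(e*z)*e = e*(z*e)"
  using assoc_xyx[of e z] unfolding associator_def by simp

lemma two_l: "e*z = z + z \<Longrightarrow> e*z = 0"
proof -
  assume h: "e*z = z + z"
  have "e*(e*z) = (z+z) + (z+z)" unfolding h by (simp add: rs h)
  hence "z + z = (z+z)+(z+z)" using ee_l[of z] h by simp
  hence "z + z = 0" by (simp add: algebra_simps)
  thus ?thesis using h by simp
qed
lemma neg_l: "e*z = - z \<Longrightarrow> e*z = z"
proof -
  assume h: "e*z = - z"
  have "e*(e*z) = z" unfolding h by (simp add: h)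
  thus ?thesis using ee_l[of z] by simp
qed
lemma two_r: "z*e = z + z \<Longrightarrow> z*e = 0"
proof -
  assume h: "z*e = z + z"
  have "(z*e)*e = (z+z) + (z+z)" unfolding h by (simp add: rs h)
  hence "z + z = (z+z)+(z+z)" using ee_r[of z] h by simp
  hence "z + z = 0" by (simp add: algebra_simps)
  thus ?thesis using h by simp
qed
lemma neg_r: "z*e = - z \<Longrightarrow> z*e = z"
proof -
  assume h: "z*e = - z"
  have "(z*e)*e = z" unfolding h by (simp add: h)
  thus ?thesis using ee_r[of z] by simp
qed

definition inP :: "bool \<Rightarrow> bool \<Rightarrow> 'a \<Rightarrow> bool" where
  "inP i j x \<longleftrightarrow> e*x = sc i x \<and> x*e = sc j x"

lemma prod_rule:
  assumes "inP i j x" "inP k l y"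
  shows "inP (i \<noteq> (j \<noteq> k)) (j \<noteq> (k \<noteq> l)) (x*y)"
proof -
  have ex: "e*x = sc i x" and xe: "x*e = sc j x" and ey: "e*y = sc k y" and ye: "y*e = sc l y"
    using assms unfolding inP_def by auto
  have A1: "associator e x y = - associator x e y" by (rule assoc_swap12)
  have A2: "associator x e y = - associator x y e" by (rule assoc_swap23)
  from A1 have L: "e*(x*y) = sc i (x*y) + sc j (x*y) - sc k (x*y)"
    unfolding associator_def ex xe ey sc_mult by (simp add: algebra_simps)
  from A2 have R: "(x*y)*e = sc l (x*y) + sc k (x*y) - sc j (x*y)"
    unfolding associator_def ex xe ey ye sc_mult by (simp add: algebra_simps)
  have L': "e*(x*y) = sc (i \<noteq> (j \<noteq> k)) (x*y)"
    using L two_l[of "x*y"] neg_l[of "x*y"] by (cases i; cases j; cases k; simp)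
  have R': "(x*y)*e = sc (j \<noteq> (k \<noteq> l)) (x*y)"
    using R two_r[of "x*y"] neg_r[of "x*y"] by (cases l; cases j; cases k; simp)
  show ?thesis using L' R' unfolding inP_def by simp
qed


lemma inP_add: "inP i j x \<Longrightarrow> inP i j y \<Longrightarrow> inP i j (x + y)"
  unfolding inP_def sc_def by (auto simp: rs)
lemma inP_neg: "inP i j x \<Longrightarrow> inP i j (- x)"
  unfolding inP_def sc_def by auto
lemma inP_diff: "inP i j x \<Longrightarrow> inP i j y \<Longrightarrow> inP i j (x - y)"
  unfolding inP_def sc_def by (auto simp: rs)
lemma inP_0[simp]: "inP i j 0"
  unfolding inP_def sc_def by auto
lemma inP_e: "inP True True e"
  unfolding inP_def by (simp add: idem)

lemma zero_11_x: "inP True True d \<Longrightarrow> e*y = 0 \<Longrightarrow> d*y = 0"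
  using moufang_l[of e d y] unfolding inP_def by simp
lemma zero_x_11: "inP True True d \<Longrightarrow> y*e = 0 \<Longrightarrow> y*d = 0"
  using moufang_r[of y e d] unfolding inP_def by simp
lemma zero_21_22: "inP False True y \<Longrightarrow> inP False False d \<Longrightarrow> y*d = 0"
proof -
  assume a: "inP False True y" "inP False False d"
  have "inP True True (y*d)" using prod_rule[OF a] by simp
  moreover have "(y*d)*e = 0" using moufang_r[of y e d] a unfolding inP_def by simp
  ultimately show ?thesis unfolding inP_def by simp
qed
lemma zero_22_12: "inP False False d \<Longrightarrow> inP True False y \<Longrightarrow> d*y = 0"
proof -
  assume a: "inP False False d" "inP True False y"
  have "inP True True (d*y)" using prod_rule[OF a] by simp
  moreover have "e*(d*y) = 0" using moufang_l[of e d y] a unfolding inP_def by simp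
  ultimately show ?thesis unfolding inP_def by simp
qed

definition p11 where "p11 x = (e*x)*e"
definition p12 where "p12 x = e*x - (e*x)*e"
definition p21 where "p21 x = x*e - (e*x)*e"
definition p22 where "p22 x = x - e*x - x*e + (e*x)*e"

lemma in_p11: "inP True True (p11 x)"
  unfolding inP_def p11_def by (simp add: ee_r flex[symmetric] ee_l)
lemma in_p12: "inP True False (p12 x)"
  unfolding inP_def p12_def by (simp add: rs ee_r flex ee_l)
lemma in_p21: "inP False True (p21 x)"
  unfolding inP_def p21_def by (simp add: rs ee_r flex ee_l)
lemma in_p22: "inP False False (p22 x)"
  unfolding inP_def p22_def by (simp add: rs ee_r flex ee_l)
lemma decomp: "x = p11 x + p12 x + p21 x + p22 x"
  unfolding p11_def p12_def p21_def p22_def by (simp add: algebra_simps)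
lemmas p_defs = p11_def p12_def p21_def p22_def
lemma p_add: "p11 (x+y) = p11 x + p11 y" "p12 (x+y) = p12 x + p12 y"
   "p21 (x+y) = p21 x + p21 y" "p22 (x+y) = p22 x + p22 y"
  unfolding p_defs by (simp_all add: rs algebra_simps)
lemma p_neg: "p11 (-x) = - p11 x" "p12 (-x) = - p12 x" "p21 (-x) = - p21 x" "p22 (-x) = - p22 x"
  unfolding p_defs by (simp_all add: algebra_simps)
lemma p_0[simp]: "p11 0 = 0" "p12 0 = 0" "p21 0 = 0" "p22 0 = 0"
  unfolding p_defs by simp_all
lemma p_in: "inP i j y \<Longrightarrow> p11 y = (if i \<and> j then y else 0)"
  "inP i j y \<Longrightarrow> p12 y = (if i \<and> \<not> j then y else 0)"
  "inP i j y \<Longrightarrow> p21 y = (if \<not> i \<and> j then y else 0)"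
  "inP i j y \<Longrightarrow> p22 y = (if \<not> i \<and> \<not> j then y else 0)"
  unfolding p_defs inP_def sc_def by (cases i; cases j; simp)+

end

lemma foldl_comm_add: "foldl commutator ((a::'a::alt_ring)+b) ys = foldl commutator a ys + foldl commutator b ys"
  by (induct ys arbitrary: a b) (simp_all add: comm_add_l)
lemma foldl_comm_0[simp]: "foldl commutator (0::'a::alt_ring) ys = 0"
  by (induct ys) simp_all
lemma foldl_comm_neg: "foldl commutator (-(a::'a::alt_ring)) ys = - foldl commutator a ys"
  by (induct ys arbitrary: a) (simp_all add: comm_neg_l)
lemma lp_snoc: "xs \<noteq> [] \<Longrightarrow> lie_poly (xs @ [y]) = commutator (lie_poly xs) y"
  by (cases xs) simp_all

lemma lp_slot_add: "j < length xs \<Longrightarrow>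
   lie_poly (xs[j:=(a::'a::alt_ring)+b]) = lie_poly (xs[j:=a]) + lie_poly (xs[j:=b])"
proof (induct xs arbitrary: j rule: rev_induct)
  case Nil thus ?case by simp
next
  case (snoc y xs)
  show ?case
  proof (cases "xs = []")
    case True thus ?thesis using snoc by simp
  next
    case ne: False
    show ?thesis
    proof (cases "j < length xs")
      case True
      hence "\<And>c. (xs @ [y])[j := c] = xs[j:=c] @ [y]" by (simp add: list_update_append)
      moreover have "\<And>c. lie_poly (xs[j:=c] @ [y]) = commutator (lie_poly (xs[j:=c])) y"
        using ne by (intro lp_snoc) simp
      ultimately show ?thesis using snoc(1)[OF True] by (simp add: comm_add_l)
    next
      case False
      hence "j = length xs" using snoc by simp
      hence "\<And>c. (xs @ [y])[j := c] = xs @ [c]" by simp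
      thus ?thesis using lp_snoc[OF ne] by (simp add: comm_add_r)
    qed
  qed
qed

lemma slotK:
  assumes der: "mult_lie_n_derivation n D" and len: "length xs = n" and j: "j < n"
  shows "D (lie_poly (xs[j:=a+b])) = D (lie_poly (xs[j:=a])) + D (lie_poly (xs[j:=b]))
          + lie_poly (xs[j := D(a+b) - D a - D b])"
proof -
  define T where "T = D(a+b) - D a - D b"
  define f where "f c i = lie_poly ((xs[j:=c])[i := D((xs[j:=c])!i)])" for c i
  have dd: "D (lie_poly (xs[j:=c])) = (\<Sum>i<n. f c i)" for c
    using der len unfolding mult_lie_n_derivation_def f_def by simp
  have eq: "f (a+b) i = f a i + f b i + (if i = j then lie_poly (xs[j:=T]) else 0)" if "i < n" for i
  proof (cases "i = j")
    case True
    have "D (a+b) = (D a + D b) + T" unfolding T_def by simp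
    hence "f (a+b) i = lie_poly (xs[j := (D a + D b) + T])" unfolding f_def using True j len by simp
    also have "\<dots> = lie_poly (xs[j := D a]) + lie_poly (xs[j := D b]) + lie_poly (xs[j:=T])"
      using lp_slot_add[of j xs "D a + D b" T] lp_slot_add[of j xs "D a" "D b"] j len by simp
    finally show ?thesis unfolding f_def using True j len by simp
  next
    case False
    have "f c i = lie_poly ((xs[i := D (xs!i)])[j:=c])" for c
      unfolding f_def using False by (simp add: list_update_swap)
    thus ?thesis using lp_slot_add[of j "xs[i := D (xs!i)]"] j len False by simp
  qed
  have "D (lie_poly (xs[j:=a+b])) = (\<Sum>i<n. f a i + f b i + (if i = j then lie_poly (xs[j:=T]) else 0))"
    unfolding dd using eq by simp
  also have "\<dots> = (\<Sum>i<n. f a i) + (\<Sum>i<n. f b i) + lie_poly (xs[j:=T])"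
    using j by (simp add: sum.distrib)
  finally show ?thesis unfolding dd T_def .
qed


lemma der23: "mult_lie_n_derivation 2 D \<Longrightarrow> mult_lie_n_derivation 3 (D::'a::alt_ring \<Rightarrow> 'a)"
proof -
  assume d2: "mult_lie_n_derivation 2 D"
  have d2': "D (commutator x y) = commutator (D x) y + commutator x (D y)" for x y
    using d2 unfolding mult_lie_n_derivation_def
    by (auto simp: numeral_2_eq_2 dest: spec[of _ "[x,y]"])
  show ?thesis unfolding mult_lie_n_derivation_def
  proof (intro allI impI)
    fix xs :: "'a list" assume "length xs = 3"
    then obtain x y z where xs: "xs = [x,y,z]"
      by (cases xs; cases "tl xs"; cases "tl (tl xs)"; auto simp: numeral_3_eq_3)
    show "D (lie_poly xs) = (\<Sum>i<3. lie_poly (xs[i := D (xs ! i)]))"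
      unfolding xs by (simp add: numeral_3_eq_3 d2' comm_add_l)
  qed
qed

lemma cc_0[simp]: "0 \<in> comm_center" unfolding comm_center_def by simp
lemma cc_add: "a \<in> comm_center \<Longrightarrow> b \<in> comm_center \<Longrightarrow> a + b \<in> comm_center"
  unfolding comm_center_def by (simp add: comm_add_l)
lemma cc_neg: "a \<in> comm_center \<Longrightarrow> - a \<in> comm_center"
  unfolding comm_center_def by (simp add: comm_neg_l)
lemma cc_diff: "a \<in> comm_center \<Longrightarrow> b \<in> comm_center \<Longrightarrow> a - b \<in> comm_center"
  using cc_add[of a "-b"] cc_neg[of b] by simp


context peirce begin
lemma comm_e_r: "commutator x e = p21 x - p12 x"
  unfolding commutator_def p_defs by (simp add: algebra_simps)
lemma comm_e_l: "commutator e x = p12 x - p21 x"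
  unfolding commutator_def p_defs by (simp add: algebra_simps)
lemma p11_in: "x \<in> peirce11 e \<Longrightarrow> inP True True x"
  unfolding peirce11_def using in_p11 unfolding p11_def by auto
lemma in_peirce11: "inP True True x \<Longrightarrow> x \<in> peirce11 e"
  unfolding peirce11_def inP_def by (auto intro!: exI[of _ x])
lemma in_peirce22: "inP False False x \<Longrightarrow> x \<in> peirce22 e"
  unfolding peirce22_def inP_def by (auto intro!: exI[of _ x])
lemma peirce12_in: "x \<in> peirce12 e \<Longrightarrow> inP True False x"
  unfolding peirce12_def using in_p12 unfolding p12_def by auto
lemma peirce21_in: "x \<in> peirce21 e \<Longrightarrow> inP False True x"
  unfolding peirce21_def using in_p21 unfolding p21_def by (auto simp: md_l)
end

locale LD = peirce e for e :: "'a::alt_ring" +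
  fixes D :: "'a \<Rightarrow> 'a" and n :: nat
  assumes der: "mult_lie_n_derivation n D" and n3: "3 \<le> n"
  and c1: "\<And>a11 a22. a11 \<in> peirce11 e \<Longrightarrow> a22 \<in> peirce22 e \<Longrightarrow>
           (\<forall>x\<in>peirce12 e. commutator (a11 + a22) x = 0) \<Longrightarrow> a11 + a22 \<in> comm_center"
  and c2: "\<And>a11 a22. a11 \<in> peirce11 e \<Longrightarrow> a22 \<in> peirce22 e \<Longrightarrow>
           (\<forall>x\<in>peirce21 e. commutator (a11 + a22) x = 0) \<Longrightarrow> a11 + a22 \<in> comm_center"
begin

definition T where "T a b = D (a + b) - D a - D b"
definition sg :: "'a \<Rightarrow> 'a" where "sg w = (if even (n - 2) then w else - w)"
definition tau where "tau w = foldl commutator w (replicate (n - 2) e)"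
definition Q where "Q x y = tau (commutator x y)"

lemma sg_simps: "sg (sg x) = x" "sg (- x) = - sg x" "sg (x + y) = sg x + sg y" "sg 0 = 0"
  unfolding sg_def by (simp_all add: algebra_simps)
lemma sg_in: "inP i j x \<Longrightarrow> inP i j (sg x)"
  unfolding sg_def by (auto intro: inP_neg)

lemma fc_21: "inP False True w \<Longrightarrow> foldl commutator w (replicate k e) = w"
proof (induct k)
  case 0 thus ?case by simp
next
  case (Suc k)
  have "commutator w e = w" using Suc(2) unfolding inP_def commutator_def by simp
  thus ?case using Suc by simp
qed
lemma fc_12: "inP True False w \<Longrightarrow> foldl commutator w (replicate k e) = (if even k then w else - w)"
proof (induct k arbitrary: w)
  case 0 thus ?case by simp
next
  case (Suc k)
  have "commutator w e = - w" using Suc(2) unfolding inP_def commutator_def by simp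
  thus ?case using Suc(1)[OF inP_neg[OF Suc(2)]] by simp
qed
lemma fc_d: "inP i i w \<Longrightarrow> 1 \<le> k \<Longrightarrow> foldl commutator w (replicate k e) = 0"
proof -
  assume a: "inP i i w" "1 \<le> k"
  then obtain k' where k: "k = Suc k'" by (cases k) auto
  have "commutator w e = 0" using a unfolding inP_def commutator_def by simp
  thus ?thesis unfolding k by simp
qed

lemma tau_in: "inP i j w \<Longrightarrow> tau w = (if i = j then 0 else if i then sg w else w)"
  unfolding tau_def sg_def using n3 fc_21[of w] fc_12[of w] fc_d[of i w]
  by (cases i; cases j; simp)
lemma tau_add: "tau (a + b) = tau a + tau b"
  unfolding tau_def by (rule foldl_comm_add)
lemma tau_neg: "tau (- a) = - tau a"
  unfolding tau_def by (rule foldl_comm_neg)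
lemma tau_diff: "tau (a - b) = tau a - tau b"
  using tau_add[of a "-b"] tau_neg[of b] by simp
lemma tau_0[simp]: "tau 0 = 0" unfolding tau_def by simp

lemma tau_formula: "tau x = p21 x + sg (p12 x)"
proof -
  have "tau x = tau (p11 x) + tau (p12 x) + tau (p21 x) + tau (p22 x)"
    using decomp[of x] tau_add by metis
  thus ?thesis using tau_in[OF in_p11] tau_in[OF in_p12] tau_in[OF in_p21] tau_in[OF in_p22]
    by (simp add: algebra_simps)
qed

lemma Q_add_l: "Q (a + b) y = Q a y + Q b y" unfolding Q_def by (simp add: comm_add_l tau_add)
lemma Q_add_r: "Q x (a + b) = Q x a + Q x b" unfolding Q_def by (simp add: comm_add_r tau_add)
lemma Q_0[simp]: "Q 0 y = 0" "Q x 0 = 0" unfolding Q_def by simp_all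

lemma Q_lp: "lie_poly (x # y # replicate (n-2) e) = Q x y"
  unfolding Q_def tau_def by simp

lemma K0: "D (Q (a+b) y) = D (Q a y) + D (Q b y) + Q (T a b) y"
proof -
  have "length (x # y # replicate (n-2) e) = n" for x using n3 by simp
  from slotK[OF der this, where j=0 and a=a and b=b] n3 show ?thesis by (simp add: Q_def tau_def T_def)
qed
lemma K1: "D (Q x (a+b)) = D (Q x a) + D (Q x b) + Q x (T a b)"
proof -
  have "length (x # y # replicate (n-2) e) = n" for y using n3 by simp
  from slotK[OF der this, where j=1 and a=a and b=b] n3 show ?thesis by (simp add: Q_def tau_def T_def)
qed

lemma D0[simp]: "D 0 = 0"
proof -
  have "D (Q (0+0) 0) = D (Q 0 0) + D (Q 0 0) + Q (T 0 0) 0" by (rule K0)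
  thus ?thesis by simp
qed
lemma T0[simp]: "T 0 b = 0" "T a 0 = 0" unfolding T_def by simp_all
lemma T_sym: "T a b = T b a" unfolding T_def by (simp add: add.commute)

lemma KT0: "Q (T a b) y = T (Q a y) (Q b y)"
  using K0[of a b y] unfolding T_def[of "Q a y"] Q_add_l by simp
lemma KT1: "Q x (T a b) = T (Q x a) (Q x b)"
  using K1[of x a b] unfolding T_def[of "Q x a"] Q_add_r by simp

lemma Q_central: "z \<in> comm_center \<Longrightarrow> Q z y = 0" "z \<in> comm_center \<Longrightarrow> Q x z = 0"
  unfolding Q_def comm_center_def by (simp_all add: comm_swap[of x z])

lemma expand:
  assumes "T \<alpha> \<beta> \<in> comm_center" "T \<gamma> \<delta> \<in> comm_center"
  shows "D (Q (\<alpha>+\<beta>) (\<gamma>+\<delta>)) = D (Q \<alpha> \<gamma>) + D (Q \<alpha> \<delta>) + D (Q \<beta> \<gamma>) + D (Q \<beta> \<delta>)"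
  using K0[of \<alpha> \<beta> "\<gamma>+\<delta>"] K1[of \<alpha> \<gamma> \<delta>] K1[of \<beta> \<gamma> \<delta>] Q_central[OF assms(1)] Q_central[OF assms(2)]
  by (simp add: algebra_simps)


lemma p_diff: "p11 (x-y) = p11 x - p11 y" "p12 (x-y) = p12 x - p12 y"
   "p21 (x-y) = p21 x - p21 y" "p22 (x-y) = p22 x - p22 y"
  using p_add[of x "-y"] p_neg[of y] by simp_all

lemma tau_prod: "inP i j x \<Longrightarrow> inP k l y \<Longrightarrow> tau (x*y) =
   (if (i \<noteq> (j \<noteq> k)) = (j \<noteq> (k \<noteq> l)) then 0 else if (i \<noteq> (j \<noteq> k)) then sg (x*y) else x*y)"
  using tau_in[OF prod_rule] by blast

lemma Q_prod: "inP i j x \<Longrightarrow> inP k l y \<Longrightarrow> Q x y = tau (x*y) - tau (y*x)"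
  unfolding Q_def commutator_def by (simp add: tau_diff)

lemma Q_e_r: "Q x e = p21 x - sg (p12 x)"
  unfolding Q_def comm_e_r tau_formula
  using p_in[OF in_p21[of x]] p_in[OF in_p12[of x]]
  by (simp add: p_diff sg_simps algebra_simps)
lemma Q_e_l: "Q e x = sg (p12 x) - p21 x"
  unfolding Q_def comm_e_l tau_formula
  using p_in[OF in_p21[of x]] p_in[OF in_p12[of x]]
  by (simp add: p_diff sg_simps algebra_simps)

lemma stepA:
  assumes a1: "inP True True a1" and a2: "inP False False a2"
  shows "p12 (T (a1+a2) b) = 0 \<and> p21 (T (a1+a2) b) = 0"
proof -
  define t where "t = T (a1+a2) b"
  have "Q (a1+a2) e = 0" unfolding Q_e_r using p_in[OF a1] p_in[OF a2] by (simp add: p_add sg_simps)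
  hence "Q t e = 0" unfolding t_def KT0 by simp
  hence h: "p21 t - sg (p12 t) = 0" unfolding Q_e_r .
  have "p21 (p21 t - sg (p12 t)) = p21 t"
    using p_in(3)[OF in_p21[of t]] p_in(3)[OF sg_in[OF in_p12[of t]]] by (simp add: p_diff)
  hence "p21 t = 0" using h by simp
  moreover have "sg (p12 t) = 0" using h calculation by simp
  hence "p12 t = 0" using sg_simps(1)[of "p12 t"] sg_simps(4) by metis
  ultimately show ?thesis unfolding t_def by simp
qed

lemma dg_decomp: "p12 t = 0 \<Longrightarrow> p21 t = 0 \<Longrightarrow> t = p11 t + p22 t"
  using decomp[of t] by simp

lemma cc2:
  assumes t1: "inP True True t1" and t2: "inP False False t2"
    and h: "\<And>w. inP False True w \<Longrightarrow> Q w (t1+t2) = 0"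
  shows "t1 + t2 \<in> comm_center"
proof (rule c2[OF in_peirce11[OF t1] in_peirce22[OF t2]], intro ballI)
  fix x assume "x \<in> peirce21 e"
  hence x: "inP False True x" by (rule peirce21_in)
  have z1: "t1 * x = 0" using zero_11_x[OF t1] x unfolding inP_def by simp
  have z2: "x * t2 = 0" using zero_21_22[OF x t2] .
  have i1: "inP False True (t2 * x)" using prod_rule[OF t2 x] by simp
  have i2: "inP False True (x * t1)" using prod_rule[OF x t1] by simp
  have "commutator x (t1+t2) = x*t1 - t2*x" unfolding commutator_def using z1 z2 by (simp add: rs)
  moreover have "inP False True (x*t1 - t2*x)" using inP_diff[OF i2 i1] .
  ultimately have "Q x (t1+t2) = x*t1 - t2*x" unfolding Q_def using tau_in by simp
  hence "x*t1 - t2*x = 0" using h[OF x] by simp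
  thus "commutator (t1 + t2) x = 0" unfolding commutator_def using z1 z2 by (simp add: rs algebra_simps)
qed

lemma cc1:
  assumes t1: "inP True True t1" and t2: "inP False False t2"
    and h: "\<And>w. inP True False w \<Longrightarrow> Q w (t1+t2) = 0"
  shows "t1 + t2 \<in> comm_center"
proof (rule c1[OF in_peirce11[OF t1] in_peirce22[OF t2]], intro ballI)
  fix x assume "x \<in> peirce12 e"
  hence x: "inP True False x" by (rule peirce12_in)
  have z1: "x * t1 = 0" using zero_x_11[OF t1] x unfolding inP_def by simp
  have z2: "t2 * x = 0" using zero_22_12[OF t2 x] .
  have i1: "inP True False (t1 * x)" using prod_rule[OF t1 x] by simp
  have i2: "inP True False (x * t2)" using prod_rule[OF x t2] by simp
  have "commutator x (t1+t2) = x*t2 - t1*x" unfolding commutator_def using z1 z2 by (simp add: rs)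
  moreover have "inP True False (x*t2 - t1*x)" using inP_diff[OF i2 i1] .
  ultimately have "Q x (t1+t2) = sg (x*t2 - t1*x)" unfolding Q_def using tau_in by simp
  hence "sg (x*t2 - t1*x) = 0" using h[OF x] by simp
  hence "x*t2 - t1*x = 0" using sg_simps(1)[of "x*t2 - t1*x"] sg_simps(4) by metis
  thus "commutator (t1 + t2) x = 0" unfolding commutator_def using z1 z2 by (simp add: rs algebra_simps)
qed

lemma diag_center:
  assumes "p12 t = 0" "p21 t = 0" "\<And>w. inP False True w \<Longrightarrow> Q w t = 0"
  shows "t \<in> comm_center"
  using cc2[OF in_p11[of t] in_p22[of t]] assms dg_decomp[OF assms(1,2)] by metis
lemma diag_center1:
  assumes "p12 t = 0" "p21 t = 0" "\<And>w. inP True False w \<Longrightarrow> Q w t = 0"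
  shows "t \<in> comm_center"
  using cc1[OF in_p11[of t] in_p22[of t]] assms dg_decomp[OF assms(1,2)] by metis


lemma C1a:
  assumes d1: "inP True True d1" and d2: "inP False False d2" and ob: "inP True False ob"
  shows "T (d1+d2) ob \<in> comm_center"
proof -
  define t where "t = T (d1+d2) ob"
  have A: "p12 t = 0" "p21 t = 0" using stepA[OF d1 d2] unfolding t_def by auto
  show ?thesis unfolding t_def[symmetric]
  proof (rule diag_center[OF A])
    fix w assume w: "inP False True w"
    have "Q w ob = 0" using Q_prod[OF w ob] tau_prod[OF w ob] tau_prod[OF ob w] by simp
    thus "Q w t = 0" unfolding t_def KT1 by simp
  qed
qed

lemma C1b:
  assumes d1: "inP True True d1" and d2: "inP False False d2" and ob: "inP False True ob"
  shows "T (d1+d2) ob \<in> comm_center"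
proof -
  define t where "t = T (d1+d2) ob"
  have A: "p12 t = 0" "p21 t = 0" using stepA[OF d1 d2] unfolding t_def by auto
  show ?thesis unfolding t_def[symmetric]
  proof (rule diag_center1[OF A])
    fix w assume w: "inP True False w"
    have "Q w ob = 0" using Q_prod[OF w ob] tau_prod[OF w ob] tau_prod[OF ob w] by simp
    thus "Q w t = 0" unfolding t_def KT1 by simp
  qed
qed

lemma C3:
  assumes u: "inP True False u" and v: "inP False True v"
  shows "T u v = 0"
proof -
  have h1: "T e v \<in> comm_center" using C1b[OF inP_e inP_0 v] by simp
  have h2: "T (sg u) e \<in> comm_center" using C1a[OF inP_e inP_0 sg_in[OF u]] T_sym by simp
  have q1: "Q e (sg u) = u" unfolding Q_e_l using p_in[OF sg_in[OF u]] by (simp add: sg_simps)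
  have q2: "Q e e = 0" unfolding Q_def commutator_def by simp
  have q3: "Q v (sg u) = 0" using Q_prod[OF v sg_in[OF u]] tau_prod[OF v sg_in[OF u]]
      tau_prod[OF sg_in[OF u] v] by simp
  have q4: "Q v e = v" unfolding Q_e_r using p_in[OF v] by (simp add: sg_simps)
  have "Q (e+v) (sg u + e) = u + v" unfolding Q_add_l Q_add_r q1 q2 q3 q4 by simp
  with expand[OF h1 h2] have "D (u + v) = D u + D v" unfolding q1 q2 q3 q4 by simp
  thus ?thesis unfolding T_def by simp
qed

lemma C4a:
  assumes u: "inP True False u" and v: "inP True False v"
  shows "T u v = 0"
proof -
  define x where "x = - sg v"
  define y where "y = sg u"
  have x: "inP True False x" unfolding x_def by (rule inP_neg[OF sg_in[OF v]])
  have y: "inP True False y" unfolding y_def by (rule sg_in[OF u])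
  have hx: "T e x \<in> comm_center" using C1a[OF inP_e inP_0 x] by simp
  have hy: "T e y \<in> comm_center" using C1a[OF inP_e inP_0 y] by simp
  define r where "r = x*y - y*x"
  have r: "inP False True r" unfolding r_def using inP_diff prod_rule[OF x y] prod_rule[OF y x] by simp
  have q1: "Q e y = u" unfolding Q_e_l using p_in[OF y] by (simp add: sg_simps y_def)
  have q2: "Q e e = 0" unfolding Q_def commutator_def by simp
  have q3: "Q x e = v" unfolding Q_e_r using p_in[OF x] by (simp add: sg_simps x_def)
  have q4: "Q x y = r" using Q_prod[OF x y] tau_prod[OF x y] tau_prod[OF y x] unfolding r_def by simp
  have "Q (e+x) (e+y) = (u + v) + r" unfolding Q_add_l Q_add_r q1 q2 q3 q4 by (simp add: algebra_simps)
  with expand[OF hx hy] have "D ((u + v) + r) = D u + D v + D r" unfolding q1 q2 q3 q4 by simp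
  moreover have "T (u+v) r = 0" using C3[OF inP_add[OF u v] r] .
  ultimately show ?thesis unfolding T_def by (simp add: algebra_simps)
qed

lemma C4b:
  assumes u: "inP False True u" and v: "inP False True v"
  shows "T u v = 0"
proof -
  define x where "x = u"
  define y where "y = - v"
  have x: "inP False True x" unfolding x_def by (rule u)
  have y: "inP False True y" unfolding y_def by (rule inP_neg[OF v])
  have hx: "T e x \<in> comm_center" using C1b[OF inP_e inP_0 x] by simp
  have hy: "T e y \<in> comm_center" using C1b[OF inP_e inP_0 y] by simp
  define r where "r = sg (x*y) - sg (y*x)"
  have r: "inP True False r" unfolding r_def using inP_diff sg_in prod_rule[OF x y] prod_rule[OF y x] by simp
  have q1: "Q e y = v" unfolding Q_e_l using p_in[OF y] by (simp add: sg_simps y_def)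
  have q2: "Q e e = 0" unfolding Q_def commutator_def by simp
  have q3: "Q x e = u" unfolding Q_e_r using p_in[OF x] by (simp add: sg_simps x_def)
  have q4: "Q x y = r" using Q_prod[OF x y] tau_prod[OF x y] tau_prod[OF y x] unfolding r_def by simp
  have "Q (e+x) (e+y) = r + (u + v)" unfolding Q_add_l Q_add_r q1 q2 q3 q4 by (simp add: algebra_simps)
  with expand[OF hx hy] have "D (r + (u + v)) = D u + D v + D r" unfolding q1 q2 q3 q4 by simp
  moreover have "T r (u+v) = 0" using C3[OF r inP_add[OF u v]] .
  ultimately show ?thesis unfolding T_def by (simp add: algebra_simps)
qed


lemma Q_w_diag:
  assumes w: "inP False True w" and a1: "inP True True a1" and a2: "inP False False a2"
  shows "inP False True (Q w (a1+a2))"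
proof -
  have "Q w (a1+a2) = w*a1 - a2*w"
    unfolding Q_add_r using Q_prod[OF w a1] tau_prod[OF w a1] tau_prod[OF a1 w]
      Q_prod[OF w a2] tau_prod[OF w a2] tau_prod[OF a2 w] by simp
  thus ?thesis using inP_diff prod_rule[OF w a1] prod_rule[OF a2 w] by simp
qed

lemma C_diag:
  assumes a1: "inP True True a1" and a2: "inP False False a2"
    and b1: "inP True True b1" and b2: "inP False False b2"
  shows "T (a1+a2) (b1+b2) \<in> comm_center"
proof -
  define t where "t = T (a1+a2) (b1+b2)"
  have A: "p12 t = 0" "p21 t = 0" using stepA[OF a1 a2] unfolding t_def by auto
  show ?thesis unfolding t_def[symmetric]
  proof (rule diag_center[OF A])
    fix w assume w: "inP False True w"
    show "Q w t = 0" unfolding t_def KT1 by (rule C4b[OF Q_w_diag[OF w a1 a2] Q_w_diag[OF w b1 b2]])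
  qed
qed

lemma C1gen:
  assumes a1: "inP True True a1" and a2: "inP False False a2"
    and o1: "inP True False o1" and o2: "inP False True o2"
  shows "T (a1+a2) (o1+o2) \<in> comm_center"
proof -
  define t where "t = T (a1+a2) (o1+o2)"
  have A: "p12 t = 0" "p21 t = 0" using stepA[OF a1 a2] unfolding t_def by auto
  show ?thesis unfolding t_def[symmetric]
  proof (rule diag_center[OF A])
    fix w assume w: "inP False True w"
    have "Q w (o1+o2) = sg (w*o2) - sg (o2*w)"
      unfolding Q_add_r using Q_prod[OF w o1] tau_prod[OF w o1] tau_prod[OF o1 w]
        Q_prod[OF w o2] tau_prod[OF w o2] tau_prod[OF o2 w] by simp
    moreover have "inP True False (sg (w*o2) - sg (o2*w))"
      using inP_diff sg_in prod_rule[OF w o2] prod_rule[OF o2 w] by simp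
    ultimately have "T (Q w (a1+a2)) (Q w (o1+o2)) = 0"
      using C3 Q_w_diag[OF w a1 a2] T_sym by metis
    thus "Q w t = 0" unfolding t_def KT1 .
  qed
qed

lemma D_split: "D x - (D (p11 x) + D (p12 x) + D (p21 x) + D (p22 x)) \<in> comm_center"
proof -
  define d where "d = p11 x + p22 x"
  define ob where "ob = p12 x + p21 x"
  have x: "x = d + ob" unfolding d_def ob_def using decomp[of x] by (simp add: algebra_simps)
  have h1: "T d ob \<in> comm_center" unfolding d_def ob_def by (rule C1gen[OF in_p11 in_p22 in_p12 in_p21])
  have h2: "T (p11 x) (p22 x) \<in> comm_center" using C_diag[OF in_p11[of x] inP_0 inP_0 in_p22[of x]] by simp
  have h3: "T (p12 x) (p21 x) = 0" by (rule C3[OF in_p12 in_p21])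
  have "D x - (D (p11 x) + D (p12 x) + D (p21 x) + D (p22 x)) = T d ob + T (p11 x) (p22 x)"
    using x h3 unfolding T_def by (simp add: algebra_simps d_def ob_def)
  thus ?thesis using cc_add[OF h1 h2] by simp
qed

theorem main: "D (a + b) - D a - D b \<in> comm_center"
proof -
  define S where "S x = D (p11 x) + D (p12 x) + D (p21 x) + D (p22 x)" for x
  have z: "D x - S x \<in> comm_center" for x unfolding S_def by (rule D_split)
  have t11: "T (p11 a) (p11 b) \<in> comm_center" using C_diag[OF in_p11[of a] inP_0 in_p11[of b] inP_0] by simp
  have t22: "T (p22 a) (p22 b) \<in> comm_center" using C_diag[OF inP_0 in_p22[of a] inP_0 in_p22[of b]] by simp
  have t12: "T (p12 a) (p12 b) = 0" by (rule C4a[OF in_p12 in_p12])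
  have t21: "T (p21 a) (p21 b) = 0" by (rule C4b[OF in_p21 in_p21])
  have "D (a + b) - D a - D b = (D (a+b) - S (a+b)) - (D a - S a) - (D b - S b)
        + (T (p11 a) (p11 b) + T (p22 a) (p22 b))"
    using t12 t21 unfolding S_def T_def p_add by (simp add: algebra_simps)
  also have "\<dots> \<in> comm_center"
    by (rule cc_add[OF cc_diff[OF cc_diff[OF z z] z] cc_add[OF t11 t22]])
  finally show ?thesis .
qed

end

theorem theorem2p1:
  fixes e1 :: "'a::alt_ring" and D :: "'a \<Rightarrow> 'a"
  assumes "nontrivial_idempotent e1"
    and "mult_lie_type_derivation D"
    and "\<And>a11 a22. a11 \<in> peirce11 e1 \<Longrightarrow> a22 \<in> peirce22 e1 \<Longrightarrow>
           (\<forall>x\<in>peirce12 e1. commutator (a11 + a22) x = 0) \<Longrightarrow> a11 + a22 \<in> comm_center"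
    and "\<And>a11 a22. a11 \<in> peirce11 e1 \<Longrightarrow> a22 \<in> peirce22 e1 \<Longrightarrow>
           (\<forall>x\<in>peirce21 e1. commutator (a11 + a22) x = 0) \<Longrightarrow> a11 + a22 \<in> comm_center"
  shows "\<forall>a b. D (a + b) - D a - D b \<in> comm_center"
proof -
  have idem: "e1 * e1 = e1" using assms(1) unfolding nontrivial_idempotent_def by simp
  obtain n where n2: "n \<ge> 2" and dn: "mult_lie_n_derivation n D"
    using assms(2) unfolding mult_lie_type_derivation_def by blast
  define n' where "n' = (if n = 2 then 3 else n)"
  have dn': "mult_lie_n_derivation n' D" unfolding n'_def using dn der23 by auto
  have n3: "3 \<le> n'" unfolding n'_def using n2 by auto
  interpret L: LD e1 D n'
    by (unfold_locales; (rule idem dn' n3)?; rule assms(3) assms(4); assumption)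
  show ?thesis using L.main by blast
qed

end
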